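(* Let $s$ be a Sturmian word with a factorization $s=U_1U_2\cdots U_n\cdots$ into non-empty factors $U_i$ of $s$. If $r_s(U_i)=r_s(U_j)$ for all $i,j\ge 1$, then for every $M>0$ there exists an index $i$ with $|U_i|>M$.
   Context: A Sturmian word is an infinite word $s\in\{a,b\}^{\omega}$ that is aperiodic (not ultimately periodic) and balanced: for all factors $u,v$ of $s$ with $|u|=|v|$ one has $||u|_x-|v|_x|\le 1$ for $x\in\{a,b\}$, where $|u|_x$ is the number of occurrences of $x$ in $u$. A non-empty factor $w$ of $s$ is rich in the letter $z\in\{a,b\}$ if there is a factor $v$ of $s$ with $|v|=|w|$ and $|w|_z>|v|_z$; every non-empty factor of a Sturmian word is rich in exactly one letter, and $r_s(w)\in\{a,b\}$ denotes that letter. *)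

theory Defs
  imports Complex_Main
begin

datatype letter = a | b

type_synonym word = "nat \<Rightarrow> letter"

definition factor :: "letter list \<Rightarrow> word \<Rightarrow> bool" where
  "factor w s \<longleftrightarrow> (\<exists>i. w = map s [i..<i + length w])"

definition occ :: "letter list \<Rightarrow> letter \<Rightarrow> nat" where
  "occ u x = length (filter (\<lambda>y. y = x) u)"

definition balanced :: "word \<Rightarrow> bool" where
  "balanced s \<longleftrightarrow> (\<forall>u v x. factor u s \<and> factor v s \<and> length u = length v \<longrightarrow>
      \<bar>int (occ u x) - int (occ v x)\<bar> \<le> 1)"

definition ultimately_periodic :: "word \<Rightarrow> bool" where
  "ultimately_periodic s \<longleftrightarrow> (\<exists>p>0. \<exists>n0. \<forall>n\<ge>n0. s (n + p) = s n)"

definition sturmian :: "word \<Rightarrow> bool" where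
  "sturmian s \<longleftrightarrow> balanced s \<and> \<not> ultimately_periodic s"

definition rich_in :: "word \<Rightarrow> letter list \<Rightarrow> letter \<Rightarrow> bool" where
  "rich_in s w z \<longleftrightarrow> w \<noteq> [] \<and> factor w s \<and>
     (\<exists>v. factor v s \<and> length v = length w \<and> occ w z > occ v z)"

text \<open>r_s(w): the (unique) letter in which w is rich.\<close>
definition rich_letter :: "word \<Rightarrow> letter list \<Rightarrow> letter" where
  "rich_letter s w = (THE z. rich_in s w z)"

text \<open>s = U 0 U 1 U 2 ... : U i occupies positions starting at the total length of U 0..U (i-1).\<close>
definition factorization :: "word \<Rightarrow> (nat \<Rightarrow> letter list) \<Rightarrow> bool" where
  "factorization s U \<longleftrightarrow> (\<forall>i. U i \<noteq> []) \<and>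
     (\<forall>i j. j < length (U i) \<longrightarrow> U i ! j = s ((\<Sum>k<i. length (U k)) + j))"

end

theory Submission
  imports Defs "HOL-Library.Infinite_Set"
begin

definition wt :: "word \<Rightarrow> letter \<Rightarrow> nat \<Rightarrow> nat \<Rightarrow> nat" where
  "wt s z i n = occ (map s [i..<i+n]) z"

definition H :: "word \<Rightarrow> letter \<Rightarrow> nat \<Rightarrow> nat" where
  "H s z n = Max (range (\<lambda>j. wt s z j n))"

lemma occ_append: "occ (u @ v) z = occ u z + occ v z"
  by (simp add: occ_def)

lemma occ_le: "occ u z \<le> length u"
  by (simp add: occ_def)

lemma occ_ab: "occ u a + occ u b = length u"
proof (induction u)
  case Nil then show ?case by (simp add: occ_def)
next
  case (Cons x u) then show ?case by (cases x) (auto simp: occ_def)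
qed

lemma wt_add: "wt s z i (m+n) = wt s z i m + wt s z (i+m) n"
  unfolding wt_def
  using upt_add_eq_append[of i "i+m" n]
  by (simp add: add.assoc occ_append)

lemma wt_one: "wt s z i (Suc 0) = (if s i = z then 1 else 0)"
  by (simp add: wt_def occ_def)

lemma wt_le: "wt s z i n \<le> n"
  unfolding wt_def using occ_le[of "map s [i..<i+n]" z] by simp

lemma H_fin: "finite (range (\<lambda>j. wt s z j n))"
  by (rule finite_subset[of _ "{..n}"]) (auto simp: wt_le)

lemma wt_le_H: "wt s z j n \<le> H s z n"
  unfolding H_def using H_fin by (intro Max_ge) auto

lemma H_attained: "\<exists>j. wt s z j n = H s z n"
proof -
  have "H s z n \<in> range (\<lambda>j. wt s z j n)"
    unfolding H_def using H_fin by (intro Max_in) auto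
  then show ?thesis by auto
qed

lemma factor_map: "factor (map s [i..<i+n]) s"
  unfolding factor_def by auto

lemma bal: assumes "balanced s" shows "wt s z i n \<le> wt s z j n + 1"
proof -
  have "\<bar>int (occ (map s [i..<i+n]) z) - int (occ (map s [j..<j+n]) z)\<bar> \<le> 1"
    using assms unfolding balanced_def using factor_map by auto
  then show ?thesis unfolding wt_def by linarith
qed

lemma periodic:
  assumes "n > 0" and "\<forall>i\<ge>p. wt s z i n = c"
  shows "ultimately_periodic s"
proof -
  have "\<forall>i\<ge>p. s (i + n) = s i"
  proof (intro allI impI)
    fix i assume i: "i \<ge> p"
    have e1: "wt s z i (Suc n) = wt s z i n + (if s (i+n) = z then 1 else 0)"
      using wt_add[of s z i n 1] wt_one by simp
    have e2: "wt s z i (Suc n) = (if s i = z then 1 else 0) + wt s z (Suc i) n"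
      using wt_add[of s z i 1 n] wt_one by simp
    have "wt s z i n = c" "wt s z (Suc i) n = c" using assms(2) i by auto
    then have "(s (i+n) = z) = (s i = z)" using e1 e2 by (auto split: if_splits)
    then show "s (i + n) = s i" by (cases "s (i+n)"; cases "s i"; cases z) auto
  qed
  then show ?thesis unfolding ultimately_periodic_def using assms(1)
    by (metis add.commute)
qed

lemma light_exists:
  assumes "sturmian s" "n > 0"
  shows "\<exists>l\<ge>p. wt s z l n < H s z n"
proof (rule ccontr)
  assume "\<not> ?thesis"
  then have "\<forall>i\<ge>p. wt s z i n = H s z n" using wt_le_H[of s z _ n]
    by (metis le_antisym not_le)
  then show False using periodic[OF assms(2)] assms(1) unfolding sturmian_def by blast
qed


lemma rich_unique:
  assumes "balanced s" "rich_in s w z1" "rich_in s w z2" shows "z1 = z2"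
proof (rule ccontr)
  assume ne: "z1 \<noteq> z2"
  obtain v1 where v1: "factor v1 s" "length v1 = length w" "occ w z1 > occ v1 z1"
    using assms(2) unfolding rich_in_def by auto
  obtain v2 where v2: "factor v2 s" "length v2 = length w" "occ w z2 > occ v2 z2"
    using assms(3) unfolding rich_in_def by auto
  have s1: "occ v1 a + occ v1 b = length w" "occ v2 a + occ v2 b = length w"
     "occ w a + occ w b = length w" using occ_ab v1 v2 by auto
  have "\<bar>int (occ v1 a) - int (occ v2 a)\<bar> \<le> 1"
    using assms(1) v1 v2 unfolding balanced_def by auto
  then show False using ne v1(3) v2(3) s1
    by (cases z1; cases z2) auto
qed

lemma rich_exists:
  assumes "sturmian s" "n > 0"
  shows "\<exists>z. rich_in s (map s [i..<i+n]) z"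
proof (rule ccontr)
  assume no: "\<not> ?thesis"
  let ?w = "map s [i..<i+n]"
  have "\<forall>j\<ge>0. wt s a j n = wt s a i n"
  proof (intro allI impI)
    fix j
    let ?v = "map s [j..<j+n]"
    have "\<not> rich_in s ?w a" "\<not> rich_in s ?w b" using no by auto
    then have "occ ?w a \<le> occ ?v a" "occ ?w b \<le> occ ?v b"
      unfolding rich_in_def using assms(2) factor_map[of s] by (auto simp: not_less)
    moreover have "occ ?v a + occ ?v b = n" "occ ?w a + occ ?w b = n"
      using occ_ab[of ?v] occ_ab[of ?w] by auto
    ultimately show "wt s a j n = wt s a i n" unfolding wt_def by linarith
  qed
  then show False using periodic[OF assms(2)] assms(1) unfolding sturmian_def by blast
qed

lemma heavy:
  assumes "balanced s" "rich_in s (map s [i..<i+n]) z"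
  shows "wt s z i n = H s z n"
proof -
  obtain v where v: "factor v s" "length v = n" "occ (map s [i..<i+n]) z > occ v z"
    using assms(2) unfolding rich_in_def by auto
  obtain j where j: "v = map s [j..<j+n]" using v(1,2) unfolding factor_def by auto
  have lt: "wt s z j n < wt s z i n" using v(3) j unfolding wt_def by simp
  obtain k where k: "wt s z k n = H s z n" using H_attained by blast
  have "wt s z k n \<le> wt s z j n + 1" using bal[OF assms(1)] .
  then show ?thesis using lt k wt_le_H[of s z i n] by linarith
qed

lemma block_eq:
  assumes "factorization s U"
  shows "U i = map s [(\<Sum>k<i. length (U k))..<(\<Sum>k<i. length (U k)) + length (U i)]"
  using assms unfolding factorization_def
  by (intro nth_equalityI) auto

lemma wt_mult: "wt s z x (j * n) \<le> j * H s z n"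
proof (induction j arbitrary: x)
  case 0 then show ?case by (simp add: wt_def occ_def)
next
  case (Suc j)
  have "wt s z x (Suc j * n) = wt s z x n + wt s z (x+n) (j*n)"
    using wt_add[of s z x n "j*n"] by simp
  also have "\<dots> \<le> H s z n + j * H s z n" using wt_le_H Suc.IH by (intro add_mono)
  finally show ?case by simp
qed

lemma wt_sum:
  assumes "finite B"
  shows "wt s z x (\<Sum>i\<in>B. f i) \<le> (\<Sum>i\<in>B. H s z (f i))"
  using assms
proof (induction B arbitrary: x rule: finite_induct)
  case empty then show ?case by (simp add: wt_def occ_def)
next
  case (insert y B)
  have "wt s z x (\<Sum>i\<in>insert y B. f i) = wt s z x (f y) + wt s z (x + f y) (\<Sum>i\<in>B. f i)"
    using insert(1,2) wt_add by simp
  also have "\<dots> \<le> H s z (f y) + (\<Sum>i\<in>B. H s z (f i))"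
    using wt_le_H insert.IH by (intro add_mono)
  finally show ?case using insert(1,2) by simp
qed


theorem mainTheorem2:
  fixes s :: word and U :: "nat \<Rightarrow> letter list"
  assumes "sturmian s"
    and "factorization s U"
    and "\<forall>i j. rich_letter s (U i) = rich_letter s (U j)"
  shows "\<forall>M::real. M > 0 \<longrightarrow> (\<exists>i. real (length (U i)) > M)"
proof (intro allI impI, rule ccontr)
  fix M :: real
  assume "M > 0" and nb: "\<not> (\<exists>i. real (length (U i)) > M)"
  define L where "L i = length (U i)" for i
  define S where "S i = (\<Sum>k<i. L k)" for i
  define N where "N = nat \<lceil>M\<rceil>"
  have bound: "L i \<le> N" for i
  proof -
    have "real (L i) \<le> M" using nb unfolding L_def by (simp add: not_less)
    also have "M \<le> real N" unfolding N_def by linarith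
    finally show ?thesis by simp
  qed
  have pos: "L i > 0" for i using assms(2) unfolding factorization_def L_def by auto
  have balS: "balanced s" using assms(1) unfolding sturmian_def by auto
  have Ueq: "U i = map s [S i..<S i + L i]" for i
    using block_eq[OF assms(2)] unfolding S_def L_def by simp
  define z where "z = rich_letter s (U 0)"
  have rich: "rich_in s (U i) z" for i
  proof -
    obtain z' where z': "rich_in s (U i) z'"
      using rich_exists[OF assms(1) pos[of i], of "S i"] Ueq by auto
    have "rich_letter s (U i) = z'" unfolding rich_letter_def
      using z' rich_unique[OF balS] by (intro the_equality) auto
    then show ?thesis using z' assms(3) unfolding z_def by metis
  qed
  have heavyB: "wt s z (S i) (L i) = H s z (L i)" for i
    using heavy[OF balS] rich[of i] Ueq[of i] by simp
  have prefix: "wt s z 0 (S m) = (\<Sum>i<m. H s z (L i))" for m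
  proof (induction m)
    case 0 then show ?case by (simp add: S_def wt_def occ_def)
  next
    case (Suc m)
    have "S (Suc m) = S m + L m" unfolding S_def by simp
    then have "wt s z 0 (S (Suc m)) = wt s z 0 (S m) + wt s z (S m) (L m)"
      using wt_add[of s z 0 "S m" "L m"] by simp
    then show ?case using Suc heavyB by simp
  qed
  have finL: "finite (range L)"
    by (rule finite_subset[of _ "{..N}"]) (auto simp: bound)
  obtain i0 where "\<not> finite {i. L i = L i0}"
    using pigeonhole_infinite[OF infinite_UNIV_nat finL] by auto
  define n where "n = L i0"
  have infI: "infinite {i. L i = n}" using \<open>\<not> finite _\<close> n_def by simp
  have npos: "n > 0" using pos n_def by simp
  define Lt where "Lt = {l. wt s z l n < H s z n}"
  have "infinite Lt" unfolding Lt_def infinite_nat_iff_unbounded_le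
    using light_exists[OF assms(1) npos] by blast
  moreover have "finite ((\<lambda>l. l mod n) ` Lt)"
    by (rule finite_subset[of _ "{..<n}"]) (auto simp: npos)
  ultimately obtain l0 where "l0 \<in> Lt" and inf2: "infinite {l\<in>Lt. l mod n = l0 mod n}"
    using pigeonhole_infinite[of Lt "\<lambda>l. l mod n"] by blast
  have "{l\<in>Lt. l mod n = l0 mod n} \<noteq> {}" using inf2 by (metis finite.emptyI)
  then obtain l1 where l1: "l1 \<in> Lt" "l1 mod n = l0 mod n" by blast
  obtain l2 where l2: "l2 > l1" "l2 \<in> Lt" "l2 mod n = l0 mod n"
    using inf2 unfolding infinite_nat_iff_unbounded by blast
  have "n dvd (l2 - l1)" using l1(2) l2(1,3)
    using mod_eq_dvd_iff_nat[of l1 l2 n] by simp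
  then obtain k where k: "l2 - l1 = n * k" by blast
  have "k > 0" using k l2(1) by (cases k) auto
  then obtain k' where k': "k = Suc k'" using not0_implies_Suc by blast
  have l2e: "l2 = l1 + n + k' * n" using k k' l2(1) by (simp add: algebra_simps)
  have light: "wt s z l1 (Suc k * n) + 2 \<le> Suc k * H s z n"
  proof -
    have "Suc k * n = n + (k' * n + n)" using k' by simp
    then have "wt s z l1 (Suc k * n) = wt s z l1 n + wt s z (l1 + n) (k'*n) + wt s z l2 n"
      using wt_add[of s z l1 n "k'*n + n"] wt_add[of s z "l1+n" "k'*n" n] l2e
      by (simp add: add.assoc)
    moreover have "wt s z l1 n < H s z n" "wt s z l2 n < H s z n"
      using l1(1) l2(2) unfolding Lt_def by auto
    moreover have "wt s z (l1 + n) (k'*n) \<le> k' * H s z n" by (rule wt_mult)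
    ultimately show ?thesis using k' by simp
  qed
  obtain F where F: "finite F" "card F = Suc k" "F \<subseteq> {i. L i = n}"
    using infinite_arbitrarily_large[OF infI] by blast
  have "F \<noteq> {}" using F(2) by auto
  define m where "m = Suc (Max F)"
  define A where "A = {i\<in>{..<m}. L i = n}"
  define B where "B = {i\<in>{..<m}. L i \<noteq> n}"
  have "F \<subseteq> A" unfolding A_def m_def using F \<open>F \<noteq> {}\<close>
    by (auto simp: less_Suc_eq_le)
  then have cA: "card A \<ge> Suc k" using F(2) card_mono[of A F] unfolding A_def by simp
  then obtain d where d: "card A = Suc k + d" using le_Suc_ex by blast
  have fin: "finite A" "finite B" unfolding A_def B_def by auto
  have un: "{..<m} = A \<union> B" "A \<inter> B = {}" unfolding A_def B_def by auto
  have sumL: "S m = card A * n + sum L B"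
  proof -
    have "S m = sum L A + sum L B" unfolding S_def un(1)
      using sum.union_disjoint[OF fin un(2)] by simp
    moreover have "sum L A = card A * n" unfolding A_def by simp
    ultimately show ?thesis by simp
  qed
  have sumH: "wt s z 0 (S m) = card A * H s z n + (\<Sum>i\<in>B. H s z (L i))"
  proof -
    have "wt s z 0 (S m) = (\<Sum>i\<in>A. H s z (L i)) + (\<Sum>i\<in>B. H s z (L i))"
      unfolding prefix un(1) using sum.union_disjoint[OF fin un(2)] by simp
    moreover have "(\<Sum>i\<in>A. H s z (L i)) = card A * H s z n" unfolding A_def by simp
    ultimately show ?thesis by simp
  qed
  have "S m = Suc k * n + (d * n + sum L B)" using sumL d by (simp add: algebra_simps)
  then have "wt s z l1 (S m) = wt s z l1 (Suc k * n) + wt s z (l1 + Suc k * n) (d * n)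
      + wt s z (l1 + Suc k * n + d * n) (sum L B)"
    using wt_add[of s z l1 "Suc k * n" "d * n + sum L B"]
      wt_add[of s z "l1 + Suc k * n" "d*n" "sum L B"] by (simp add: add.assoc)
  moreover have "wt s z (l1 + Suc k * n) (d * n) \<le> d * H s z n" by (rule wt_mult)
  moreover have "wt s z (l1 + Suc k * n + d * n) (sum L B) \<le> (\<Sum>i\<in>B. H s z (L i))"
    by (rule wt_sum[OF fin(2)])
  ultimately have "wt s z l1 (S m) + 2 \<le> card A * H s z n + (\<Sum>i\<in>B. H s z (L i))"
    using light d by (simp add: algebra_simps)
  moreover have "wt s z 0 (S m) \<le> wt s z l1 (S m) + 1" by (rule bal[OF balS])
  ultimately show False using sumH by linarith
qed

end
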